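(* Let $d\ge2$ and let $\omega$ be any configuration of faces. For each finite open cluster $C^*$ of the dual bond configuration there is a unique hole $D$ of $K(\omega)$ with $D\cap(\mathbb{Z}^d)^*$ equal to the vertex set of $C^*$, and the map $C^*\mapsto D$ is a bijection between the finite open dual clusters and the holes. Moreover, under this bijection two holes $D,D'$ are adjacent if and only if the corresponding finite clusters $C^*,(C^* )'$ satisfy $\Delta C^*\cap\Delta (C^* )'\neq\emptyset$.
   Context: A face is a $(d-1)$-dimensional elementary cube in $\mathbb{R}^d$ (a product of intervals $[l,l]$ or $[l,l+1]$, $l\in\mathbb{Z}$, with exactly one degenerate factor). A configuration $\omega$ declares each face open or closed; $K(\omega)$ is the union of open faces. A hole is a bounded connected component of $\mathbb{R}^d\setminus K(\omega)$; two holes are adjacent iff some face is contained in the boundary of both. Dual lattice: vertices $(\mathbb{Z}^d)^*=\mathbb{Z}^d+(1/2,\dots,1/2)$, dual bonds $\langle x^*,y^*\rangle$ with $\|x^*-y^*\|_1=1$. Each dual bond $e^*$ meets exactly one face $Q_{e^*}$ (namely $Q_{e^*}=B_{x^*}\cap B_{y^*}$ where $B_{z^*}=\prod_i[(z^* )_i-1/2,(z^* )_i+1/2]$); the dual bond $e^*$ is declared open iff $Q_{e^*}$ is closed. An open dual cluster is a connected component (possibly a single vertex) of the graph on $(\mathbb{Z}^d)^*$ formed by open dual bonds. For a cluster $C^*$, $\Delta C^*$ is the set of dual bonds with exactly one endpoint in $C^*$. *)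

theory Defs
  imports "HOL-Analysis.Analysis"
begin

definition faces :: "(real^'n) set set" where
  "faces = {Q. \<exists>(l::int^'n) k. Q = {x. x$k = of_int (l$k) \<and>
      (\<forall>j. j \<noteq> k \<longrightarrow> of_int (l$j) \<le> x$j \<and> x$j \<le> of_int (l$j) + 1)}}"

text \<open>A configuration is a predicate omega on sets; only its values on faces matter
  (omega Q = True means the face Q is open).\<close>
definition Kset :: "((real^'n) set \<Rightarrow> bool) \<Rightarrow> (real^'n) set" where
  "Kset \<omega> = \<Union>{Q \<in> faces. \<omega> Q}"

definition hole :: "((real^'n) set \<Rightarrow> bool) \<Rightarrow> (real^'n) set \<Rightarrow> bool" where
  "hole \<omega> D \<longleftrightarrow> D \<in> components (- Kset \<omega>) \<and> bounded D"

definition adjacent_holes :: "((real^'n) set \<Rightarrow> bool) \<Rightarrow> (real^'n) set \<Rightarrow> (real^'n) set \<Rightarrow> bool" where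
  "adjacent_holes \<omega> D D' \<longleftrightarrow> (\<exists>Q\<in>faces. Q \<subseteq> frontier D \<and> Q \<subseteq> frontier D')"

definition dual_verts :: "(real^'n) set" where
  "dual_verts = {x. \<forall>i. x$i - 1/2 \<in> \<int>}"

definition dual_bond :: "real^'n \<Rightarrow> real^'n \<Rightarrow> bool" where
  "dual_bond x y \<longleftrightarrow> x \<in> dual_verts \<and> y \<in> dual_verts \<and> (\<Sum>i\<in>UNIV. \<bar>x$i - y$i\<bar>) = 1"

definition dual_box :: "real^'n \<Rightarrow> (real^'n) set" where
  "dual_box z = cbox (z - (\<chi> i. 1/2)) (z + (\<chi> i. 1/2))"

definition bond_face :: "real^'n \<Rightarrow> real^'n \<Rightarrow> (real^'n) set" where
  "bond_face x y = dual_box x \<inter> dual_box y"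

definition open_dual_bond :: "((real^'n) set \<Rightarrow> bool) \<Rightarrow> real^'n \<Rightarrow> real^'n \<Rightarrow> bool" where
  "open_dual_bond \<omega> x y \<longleftrightarrow> dual_bond x y \<and> \<not> \<omega> (bond_face x y)"

definition dual_cluster :: "((real^'n) set \<Rightarrow> bool) \<Rightarrow> real^'n \<Rightarrow> (real^'n) set" where
  "dual_cluster \<omega> x = {y. (open_dual_bond \<omega>)\<^sup>*\<^sup>* x y}"

definition finite_dual_clusters :: "((real^'n) set \<Rightarrow> bool) \<Rightarrow> (real^'n) set set" where
  "finite_dual_clusters \<omega> = {C. (\<exists>x\<in>dual_verts. C = dual_cluster \<omega> x) \<and> finite C}"

definition edge_boundary :: "(real^'n) set \<Rightarrow> (real^'n) set set" where
  "edge_boundary C = {{x, y} | x y. dual_bond x y \<and> x \<in> C \<and> y \<notin> C}"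

definition hole_of :: "((real^'n) set \<Rightarrow> bool) \<Rightarrow> (real^'n) set \<Rightarrow> (real^'n) set" where
  "hole_of \<omega> C = (THE D. hole \<omega> D \<and> D \<inter> dual_verts = C)"

end

theory Submission
  imports Defs
begin

definition fset :: "int^'n \<Rightarrow> 'n \<Rightarrow> (real^'n) set" where
 "fset l k = {x. x$k = of_int (l$k) \<and> (\<forall>j. j \<noteq> k \<longrightarrow> of_int (l$j) \<le> x$j \<and> x$j \<le> of_int (l$j) + 1)}"

lemma faces_eq: "faces = {Q. \<exists>l k. Q = fset l k}"
  unfolding faces_def fset_def by simp

lemma K_mem: "p \<in> Kset \<omega> \<longleftrightarrow> (\<exists>l k. \<omega> (fset l k) \<and> p \<in> fset l k)"
  unfolding Kset_def faces_eq by blast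

lemma fset_int: "p \<in> fset l k \<Longrightarrow> p$k \<in> \<int>"
  unfolding fset_def by auto

lemma nonint_notK: "(\<And>j. p$j \<notin> \<int>) \<Longrightarrow> p \<notin> Kset \<omega>"
  using K_mem fset_int by blast

lemma half_int_lt:
  fixes x y :: real
  assumes "x - 1/2 \<in> \<int>" "\<bar>y - x\<bar> < 1/2" shows "y \<notin> \<int>"
proof
  assume "y \<in> \<int>"
  then obtain m where m: "y = of_int m" by (auto elim: Ints_cases)
  obtain n where n: "x - 1/2 = of_int n" using assms(1) by (auto elim: Ints_cases)
  have ab: "y - x < 1/2" "x - y < 1/2" using assms(2) by linarith+
  have "of_int n < (of_int m::real)" "(of_int m::real) < of_int n + 1" using ab m n by linarith+
  then have "n < m" "m < n + 1" by linarith+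
  then show False by simp
qed

lemma intlem1: "\<exists>e>0. \<forall>m\<in>\<int>. m \<noteq> t \<longrightarrow> e \<le> \<bar>t - m\<bar>" for t :: real
proof (cases "t \<in> \<int>")
  case True
  then obtain n where n: "t = of_int n" by (auto elim: Ints_cases)
  show ?thesis
  proof (intro exI[of _ 1] conjI ballI impI)
    fix m assume "m \<in> \<int>" "m \<noteq> t"
    then obtain k where k: "m = of_int k" by (auto elim: Ints_cases)
    with n \<open>m \<noteq> t\<close> have "k \<noteq> n" by auto
    then have "1 \<le> \<bar>n - k\<bar>" by linarith
    then show "1 \<le> \<bar>t - m\<bar>" using n k
      by (metis of_int_1_le_iff of_int_abs of_int_diff)
  qed simp
next
  case False
  have a: "of_int \<lfloor>t\<rfloor> < t"
    using False by (metis Ints_of_int floor_less_iff less_eq_real_def of_int_floor_le)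
  have b: "t < of_int \<lceil>t\<rceil>"
    using False by (metis Ints_of_int ceiling_le_iff le_of_int_ceiling less_eq_real_def)
  show ?thesis
  proof (intro exI[of _ "min (t - of_int \<lfloor>t\<rfloor>) (of_int \<lceil>t\<rceil> - t)"] conjI ballI impI)
    fix m assume "m \<in> \<int>" "m \<noteq> t"
    then obtain k where k: "m = of_int k" by (auto elim: Ints_cases)
    have "k \<le> \<lfloor>t\<rfloor> \<or> \<lceil>t\<rceil> \<le> k"
      by (metis le_floor_iff ceiling_le_iff linear)
    then show "min (t - of_int \<lfloor>t\<rfloor>) (of_int \<lceil>t\<rceil> - t) \<le> \<bar>t - m\<bar>"
      using k a b by (auto simp: min_def)
  qed (use a b in auto)
qed

lemma intlem: "\<exists>e>0. \<forall>j. \<forall>m\<in>\<int>. m \<noteq> p$j \<longrightarrow> e \<le> \<bar>p$j - m\<bar>"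
  for p :: "real^'n"
proof -
  have "\<forall>j. \<exists>e>0. \<forall>m\<in>\<int>. m \<noteq> p$j \<longrightarrow> e \<le> \<bar>p$j - m\<bar>" using intlem1 by blast
  then obtain E where E: "\<And>j. E j > 0 \<and> (\<forall>m\<in>\<int>. m \<noteq> p$j \<longrightarrow> E j \<le> \<bar>p$j - m\<bar>)"
    by metis
  have fin: "finite (range E)" by simp
  have "Min (range E) > 0" using E fin by (subst Min_gr_iff) auto
  moreover have "\<And>j. Min (range E) \<le> E j" using fin by simp
  ultimately show ?thesis using E by (meson order_trans)
qed

definition goodr :: "real^'n \<Rightarrow> real \<Rightarrow> bool" where
  "goodr p e \<longleftrightarrow> e > 0 \<and> (\<forall>j. \<forall>m\<in>\<int>. m \<noteq> p$j \<longrightarrow> e \<le> \<bar>p$j - m\<bar>)"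

lemma goodr_ex: "\<exists>e. goodr p e"
  using intlem unfolding goodr_def by blast

lemma comp_le_dist: "\<bar>p$j - y$j\<bar> \<le> dist p y" for p y :: "real^'n"
  by (metis component_le_norm_cart dist_norm vector_minus_component)

lemma local_face:
  assumes g: "goodr p e" and d: "dist p y < e" and y: "y \<in> fset l k"
  shows "p \<in> fset l k"
proof -
  have c: "\<bar>p$j - y$j\<bar> < e" for j using comp_le_dist[of p j y] d by linarith
  have g2: "\<And>j m. m \<in> \<int> \<Longrightarrow> m \<noteq> p$j \<Longrightarrow> e \<le> \<bar>p$j - m\<bar>" using g unfolding goodr_def by blast
  have "p$k = of_int (l$k)"
  proof (rule ccontr)
    assume "p$k \<noteq> of_int (l$k)"
    then have "e \<le> \<bar>p$k - of_int (l$k)\<bar>" using g2 by auto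
    moreover have "y$k = of_int (l$k)" using y unfolding fset_def by auto
    ultimately show False using c[of k] by auto
  qed
  moreover have "of_int (l$j) \<le> p$j \<and> p$j \<le> of_int (l$j) + 1" if "j \<noteq> k" for j
  proof -
    have yj: "of_int (l$j) \<le> y$j" "y$j \<le> of_int (l$j) + 1" using y that unfolding fset_def by auto
    show ?thesis
    proof (rule ccontr)
      assume "\<not> ?thesis"
      then consider "p$j < of_int (l$j)" | "p$j > of_int (l$j) + 1" by linarith
      then show False
      proof cases
        case 1
        then have "e \<le> \<bar>p$j - of_int (l$j)\<bar>" using g2[of "of_int (l$j)" j] by auto
        then show False using c[of j] yj 1 by auto
      next
        case 2
        then have "e \<le> \<bar>p$j - of_int (l$j + 1)\<bar>" using g2[of "of_int (l$j + 1)" j] by auto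
        then show False using c[of j] yj 2 by auto
      qed
    qed
  qed
  ultimately show ?thesis unfolding fset_def by auto
qed

lemma dual_box_mem: "p \<in> dual_box w \<longleftrightarrow> (\<forall>j. \<bar>p$j - w$j\<bar> \<le> 1/2)"
proof -
  have "p \<in> dual_box w \<longleftrightarrow> (\<forall>j. w$j - 1/2 \<le> p$j \<and> p$j \<le> w$j + 1/2)"
    by (simp add: dual_box_def mem_box_cart)
  also have "\<dots> \<longleftrightarrow> (\<forall>j. \<bar>p$j - w$j\<bar> \<le> 1/2)"
  proof -
    have "\<And>j. (w$j - 1/2 \<le> p$j \<and> p$j \<le> w$j + 1/2) \<longleftrightarrow> \<bar>p$j - w$j\<bar> \<le> 1/2"
      by (smt (verit))
    then show ?thesis by simp
  qed
  finally show ?thesis .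
qed

lemma local_box:
  assumes g: "goodr p e" and d: "dist p y < e" and y: "y \<in> dual_box w" and w: "w \<in> dual_verts"
  shows "p \<in> dual_box w"
proof -
  have c: "\<bar>p$j - y$j\<bar> < e" for j using comp_le_dist[of p j y] d by linarith
  have g2: "\<And>j m. m \<in> \<int> \<Longrightarrow> m \<noteq> p$j \<Longrightarrow> e \<le> \<bar>p$j - m\<bar>" using g unfolding goodr_def by blast
  have "\<bar>p$j - w$j\<bar> \<le> 1/2" for j
  proof (rule ccontr)
    have wi: "w$j - 1/2 \<in> \<int>" using w unfolding dual_verts_def by auto
    have wi2: "w$j + 1/2 \<in> \<int>"
    proof -
      have "w$j + 1/2 = (w$j - 1/2) + 1" by simp
      then show ?thesis using Ints_add[OF wi Ints_1] by metis
    qed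
    have yj: "\<bar>y$j - w$j\<bar> \<le> 1/2" using y dual_box_mem by blast
    assume "\<not> ?thesis"
    then consider "p$j < w$j - 1/2" | "p$j > w$j + 1/2" by linarith
    then show False
    proof cases
      case 1
      then have "e \<le> \<bar>p$j - (w$j - 1/2)\<bar>" using g2[OF wi, of j] by auto
      then show False using c[of j] yj 1 by auto
    next
      case 2
      then have "e \<le> \<bar>p$j - (w$j + 1/2)\<bar>" using g2[OF wi2, of j] by auto
      then show False using c[of j] yj 2 by auto
    qed
  qed
  then show ?thesis using dual_box_mem by blast
qed


lemma dv_half: "w \<in> dual_verts \<Longrightarrow> w$j - 1/2 \<in> \<int>"
  unfolding dual_verts_def by auto

lemma int_small: "(a::real) \<in> \<int> \<Longrightarrow> \<bar>a\<bar> \<le> 1/2 \<Longrightarrow> a = 0"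
proof -
  assume "a \<in> \<int>" "\<bar>a\<bar> \<le> 1/2"
  then obtain n where n: "a = of_int n" "\<bar>of_int n\<bar> \<le> (1/2::real)" by (auto elim: Ints_cases)
  then have "-1 < n" "n < 1" by linarith+
  then have "n = 0" by linarith
  then show ?thesis using n by simp
qed

lemma floor_half: "t - 1/2 \<in> \<int> \<Longrightarrow> of_int \<lfloor>t\<rfloor> = t - 1/2"
proof -
  assume "t - 1/2 \<in> \<int>"
  then obtain n where n: "t - 1/2 = of_int n" by (auto elim: Ints_cases)
  then have "\<lfloor>t\<rfloor> = n" by (intro floor_unique) linarith+
  then show ?thesis using n by simp
qed

lemma some_box: "\<exists>w\<in>dual_verts. y \<in> dual_box w"
proof (intro bexI)
  let ?w = "(\<chi> j. of_int \<lfloor>y$j\<rfloor> + 1/2) :: real^'a"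
  show "?w \<in> dual_verts" unfolding dual_verts_def by simp
  have "\<bar>y$j - ?w$j\<bar> \<le> 1/2" for j
  proof -
    have "?w$j = of_int \<lfloor>y$j\<rfloor> + 1/2" by simp
    then show ?thesis using of_int_floor_le[of "y$j"] real_of_int_floor_add_one_gt[of "y$j"] by linarith
  qed
  then show "y \<in> dual_box ?w" using dual_box_mem by blast
qed

lemma dv_box_eq: "v \<in> dual_verts \<Longrightarrow> w \<in> dual_verts \<Longrightarrow> v \<in> dual_box w \<Longrightarrow> v = w"
proof -
  assume v: "v \<in> dual_verts" and w: "w \<in> dual_verts" and b: "v \<in> dual_box w"
  have "v$j - w$j = 0" for j
  proof (rule int_small)
    have "v$j - w$j = (v$j - 1/2) - (w$j - 1/2)" by simp
    then show "v$j - w$j \<in> \<int>" using dv_half[OF v] dv_half[OF w] by (metis Ints_diff)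
    show "\<bar>v$j - w$j\<bar> \<le> 1/2" using b dual_box_mem by blast
  qed
  then show ?thesis by (simp add: vec_eq_iff)
qed

lemma inner_notK:
  assumes "w \<in> dual_verts" "\<And>j. \<bar>p$j - w$j\<bar> < 1/2" shows "p \<notin> Kset \<omega>"
  by (rule nonint_notK) (use half_int_lt dv_half assms in blast)

lemma dv_notK: "w \<in> dual_verts \<Longrightarrow> w \<notin> Kset \<omega>"
  by (rule inner_notK) auto

lemma seg_notK:
  assumes w: "w \<in> dual_verts" and y: "y \<in> dual_box w" and yK: "y \<notin> Kset \<omega>"
  shows "closed_segment w y \<subseteq> - Kset \<omega>"
proof
  fix p assume "p \<in> closed_segment w y"
  then obtain u where u: "0 \<le> u" "u \<le> 1" "p = (1 - u) *\<^sub>R w + u *\<^sub>R y" by (auto simp: in_segment)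
  show "p \<in> - Kset \<omega>"
  proof (cases "u = 1")
    case True then show ?thesis using u yK by simp
  next
    case False
    have "\<bar>p$j - w$j\<bar> < 1/2" for j
    proof -
      have "p$j = (1-u) * w$j + u * y$j" using u(3) by simp
      then have "p$j - w$j = u * (y$j - w$j)" by (simp add: algebra_simps)
      then have "\<bar>p$j - w$j\<bar> = u * \<bar>y$j - w$j\<bar>" using u(1) by (simp add: abs_mult)
      also have "\<dots> \<le> u * (1/2)" using y dual_box_mem u(1) by (meson mult_left_mono)
      also have "\<dots> < 1/2" using u False by simp
      finally show ?thesis .
    qed
    then show ?thesis using inner_notK[OF w] by blast
  qed
qed

lemma seg_cc:
  assumes "w \<in> dual_verts" "y \<in> dual_box w" "y \<notin> Kset \<omega>"
  shows "connected_component (- Kset \<omega>) w y"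
  by (rule connected_componentI[OF connected_segment seg_notK[OF assms]]) auto

lemma bond_coord:
  assumes "dual_bond x y"
  shows "\<exists>k. \<bar>x$k - y$k\<bar> = 1 \<and> (\<forall>j. j \<noteq> k \<longrightarrow> x$j = y$j)"
proof -
  have x: "x \<in> dual_verts" and y: "y \<in> dual_verts" and s: "(\<Sum>i\<in>UNIV. \<bar>x$i - y$i\<bar>) = 1"
    using assms unfolding dual_bond_def by auto
  have I: "x$i - y$i \<in> \<int>" for i
  proof -
    have "x$i - y$i = (x$i - 1/2) - (y$i - 1/2)" by simp
    then show ?thesis using dv_half[OF x] dv_half[OF y] by (metis Ints_diff)
  qed
  obtain k where k: "x$k \<noteq> y$k"
  proof (rule ccontr)
    assume "\<not> thesis"
    then have "\<forall>i. x$i = y$i" using that by blast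
    then show False using s by simp
  qed
  have "1 \<le> \<bar>x$k - y$k\<bar>"
  proof -
    obtain n where n: "x$k - y$k = of_int n" using I[of k] by (auto elim: Ints_cases)
    then have "n \<noteq> 0" using k by auto
    then have "1 \<le> \<bar>n\<bar>" by linarith
    then show ?thesis using n by (metis of_int_1_le_iff of_int_abs)
  qed
  moreover have "(\<Sum>i\<in>UNIV. \<bar>x$i - y$i\<bar>) = \<bar>x$k - y$k\<bar> + (\<Sum>i\<in>UNIV-{k}. \<bar>x$i - y$i\<bar>)"
    by (simp add: sum.remove)
  moreover have "(\<Sum>i\<in>UNIV-{k}. \<bar>x$i - y$i\<bar>) \<ge> 0" by (simp add: sum_nonneg)
  ultimately have a: "\<bar>x$k - y$k\<bar> = 1" and b: "(\<Sum>i\<in>UNIV-{k}. \<bar>x$i - y$i\<bar>) = 0"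
    using s by linarith+
  from b have "\<forall>i\<in>UNIV-{k}. \<bar>x$i - y$i\<bar> = 0"
    by (subst (asm) sum_nonneg_eq_0_iff) auto
  then show ?thesis using a by auto
qed

definition lvec :: "real^'n \<Rightarrow> real^'n \<Rightarrow> 'n \<Rightarrow> int^'n" where
  "lvec x y k = (\<chi> j. if j = k then \<lfloor>(x$k + y$k)/2\<rfloor> else \<lfloor>x$j\<rfloor>)"

lemma mid_int:
  assumes "x \<in> dual_verts" "\<bar>x$k - y$k\<bar> = 1"
  shows "(x$k + y$k)/2 \<in> \<int>"
proof -
  have h: "x$k - 1/2 \<in> \<int>" using dv_half[OF assms(1)] .
  consider "y$k = x$k + 1" | "y$k = x$k - 1" using assms(2) by linarith
  then show ?thesis
  proof cases
    case 1
    then have "(x$k + y$k)/2 = (x$k - 1/2) + 1" by simp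
    then show ?thesis using h by (metis Ints_1 Ints_add)
  next
    case 2
    then have "(x$k + y$k)/2 = x$k - 1/2" by simp
    then show ?thesis using h by metis
  qed
qed

lemma bond_face_eq:
  assumes x: "x \<in> dual_verts" and k: "\<bar>x$k - y$k\<bar> = 1" and o: "\<forall>j. j \<noteq> k \<longrightarrow> x$j = y$j"
  shows "bond_face x y = fset (lvec x y k) k"
proof -
  have c: "of_int \<lfloor>(x$k + y$k)/2\<rfloor> = (x$k + y$k)/2" using mid_int[OF x k]
    by (metis Ints_cases floor_of_int)
  have f: "j \<noteq> k \<Longrightarrow> of_int \<lfloor>x$j\<rfloor> = x$j - 1/2" for j using floor_half dv_half[OF x] by blast
  show ?thesis
  proof (rule set_eqI)
    fix p
    have "p \<in> bond_face x y \<longleftrightarrow> (\<forall>j. \<bar>p$j - x$j\<bar> \<le> 1/2 \<and> \<bar>p$j - y$j\<bar> \<le> 1/2)"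
      unfolding bond_face_def using dual_box_mem by blast
    also have "\<dots> \<longleftrightarrow> p \<in> fset (lvec x y k) k"
    proof -
      have A: "(\<bar>p$k - x$k\<bar> \<le> 1/2 \<and> \<bar>p$k - y$k\<bar> \<le> 1/2) \<longleftrightarrow> p$k = (x$k + y$k)/2"
      proof -
        have "y$k = x$k + 1 \<or> y$k = x$k - 1" using k by linarith
        then show ?thesis unfolding abs_le_iff by (elim disjE) (simp_all, linarith+)
      qed
      have B: "(\<bar>p$j - x$j\<bar> \<le> 1/2 \<and> \<bar>p$j - y$j\<bar> \<le> 1/2) \<longleftrightarrow>
           (x$j - 1/2 \<le> p$j \<and> p$j \<le> x$j - 1/2 + 1)" if "j \<noteq> k" for j
      proof -
        have "y$j = x$j" using o that by auto
        then show ?thesis by (intro iffI conjI; elim conjE; linarith)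
      qed
      have "(\<forall>j. \<bar>p$j - x$j\<bar> \<le> 1/2 \<and> \<bar>p$j - y$j\<bar> \<le> 1/2) \<longleftrightarrow>
         (\<bar>p$k - x$k\<bar> \<le> 1/2 \<and> \<bar>p$k - y$k\<bar> \<le> 1/2) \<and>
         (\<forall>j. j \<noteq> k \<longrightarrow> (\<bar>p$j - x$j\<bar> \<le> 1/2 \<and> \<bar>p$j - y$j\<bar> \<le> 1/2))" by metis
      also have "\<dots> \<longleftrightarrow> p$k = (x$k + y$k)/2 \<and> (\<forall>j. j \<noteq> k \<longrightarrow> (x$j - 1/2 \<le> p$j \<and> p$j \<le> x$j - 1/2 + 1))"
        using A B by auto
      also have "\<dots> \<longleftrightarrow> p \<in> fset (lvec x y k) k"
        unfolding fset_def lvec_def using c f by auto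
      finally show ?thesis .
    qed
    finally show "p \<in> bond_face x y \<longleftrightarrow> p \<in> fset (lvec x y k) k" .
  qed
qed

lemma bond_face_face: "dual_bond x y \<Longrightarrow> bond_face x y \<in> faces"
  using bond_coord bond_face_eq faces_eq dual_bond_def by (smt (verit) mem_Collect_eq)


lemma dv_diff_int: "v \<in> dual_verts \<Longrightarrow> w \<in> dual_verts \<Longrightarrow> v$j - w$j \<in> \<int>"
proof -
  assume v: "v \<in> dual_verts" and w: "w \<in> dual_verts"
  have "v$j - w$j = (v$j - 1/2) - (w$j - 1/2)" by simp
  then show ?thesis using dv_half[OF v] dv_half[OF w] by (metis Ints_diff)
qed

lemma dv_nonint: assumes "x \<in> dual_verts" shows "x$j \<notin> \<int>"
proof -
  have "\<bar>x$j - x$j\<bar> < 1/2" by simp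
  then show ?thesis using half_int_lt[OF dv_half[OF assms, of j], of "x$j"] by simp
qed

definition midv :: "real^'n \<Rightarrow> real^'n \<Rightarrow> real^'n" where
  "midv x y = (\<chi> j. (x$j + y$j)/2)"

lemma mid_unique:
  assumes x: "x \<in> dual_verts" and k: "\<bar>x$k - y$k\<bar> = 1" and o: "\<forall>j. j \<noteq> k \<longrightarrow> x$j = y$j"
    and m: "midv x y \<in> fset l' k'"
  shows "fset l' k' = bond_face x y"
proof -
  have mk: "(midv x y)$j = (x$j + y$j)/2" for j by (simp add: midv_def)
  have kk: "k' = k"
  proof (rule ccontr)
    assume "k' \<noteq> k"
    then have "(midv x y)$k' = x$k'" using o by (simp add: midv_def)
    then show False using fset_int[OF m] dv_nonint[OF x] by simp
  qed
  have "l' = lvec x y k"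
  proof (subst vec_eq_iff, intro allI)
    fix j
    show "l'$j = lvec x y k $ j"
    proof (cases "j = k")
      case True
      have "of_int (l'$k) = (x$k + y$k)/2" using m kk mk unfolding fset_def by auto
      then have "\<lfloor>(x$k + y$k)/2\<rfloor> = l'$k" by (metis floor_of_int)
      then show ?thesis using True unfolding lvec_def by simp
    next
      case False
      have b: "of_int (l'$j) \<le> x$j" "x$j \<le> of_int (l'$j) + 1"
        using m kk mk False o unfolding fset_def by auto
      obtain n where n: "x$j - 1/2 = of_int n" using dv_half[OF x] by (auto elim: Ints_cases)
      have "l'$j < n + 1" "n < l'$j + 1" using b n by linarith+
      then have "l'$j = n" by linarith
      moreover have "\<lfloor>x$j\<rfloor> = n"
      proof -
        have "real_of_int \<lfloor>x$j\<rfloor> = real_of_int n" using floor_half[OF dv_half[OF x, of j]] n by linarith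
        then show ?thesis by simp
      qed
      ultimately show ?thesis using False unfolding lvec_def by simp
    qed
  qed
  then show ?thesis using bond_face_eq[OF x k o] kk by simp
qed

lemma bond_cc:
  assumes "open_dual_bond \<omega> x y"
  shows "connected_component (- Kset \<omega>) x y"
proof -
  have b: "dual_bond x y" and nw: "\<not> \<omega> (bond_face x y)" using assms unfolding open_dual_bond_def by auto
  have x: "x \<in> dual_verts" and y: "y \<in> dual_verts" using b unfolding dual_bond_def by auto
  obtain k where k: "\<bar>x$k - y$k\<bar> = 1" and o: "\<forall>j. j \<noteq> k \<longrightarrow> x$j = y$j" using bond_coord[OF b] by blast
  let ?m = "midv x y"
  have mk: "?m$j = (x$j + y$j)/2" for j by (simp add: midv_def)
  have "\<bar>x$j - y$j\<bar> \<le> 1" for j using k o by (cases "j = k") auto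
  then have "\<bar>(x$j + y$j)/2 - x$j\<bar> \<le> 1/2 \<and> \<bar>(x$j + y$j)/2 - y$j\<bar> \<le> 1/2" for j
  proof -
    have e1: "(x$j + y$j)/2 - x$j = (y$j - x$j)/2" "(x$j + y$j)/2 - y$j = (x$j - y$j)/2"
      by (simp_all add: field_simps)
    have "\<bar>x$j - y$j\<bar> \<le> 1" by fact
    then show ?thesis unfolding e1 by (simp add: abs_minus_commute)
  qed
  then have mx: "?m \<in> dual_box x" and my: "?m \<in> dual_box y"
    unfolding dual_box_mem mk by blast+
  have mK: "?m \<notin> Kset \<omega>"
  proof
    assume "?m \<in> Kset \<omega>"
    then obtain l k' where "\<omega> (fset l k')" "?m \<in> fset l k'" using K_mem by blast
    then show False using mid_unique[OF x k o] nw by metis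
  qed
  show ?thesis
    using seg_cc[OF x mx mK] seg_cc[OF y my mK] connected_component_sym connected_component_trans
    by metis
qed

lemma subcube_aux:
  assumes qK: "q \<notin> Kset \<omega>" and w: "w \<in> dual_verts" and qw: "q \<in> dual_box w"
  shows "\<forall>w'. card {i. w$i \<noteq> w'$i} = n \<longrightarrow> w' \<in> dual_verts \<longrightarrow> q \<in> dual_box w'
     \<longrightarrow> (open_dual_bond \<omega>)\<^sup>*\<^sup>* w w'"
proof (induction n)
  case 0
  show ?case
  proof (intro allI impI)
    fix w' assume "card {i. w$i \<noteq> w'$i} = 0"
    then have "{i. w$i \<noteq> w'$i} = {}" by simp
    then have "w = w'" by (auto simp: vec_eq_iff)
    then show "(open_dual_bond \<omega>)\<^sup>*\<^sup>* w w'" by simp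
  qed
next
  case (Suc n)
  show ?case
  proof (intro allI impI)
    fix w' assume c: "card {i. w$i \<noteq> w'$i} = Suc n" and w': "w' \<in> dual_verts" and qw': "q \<in> dual_box w'"
    have "{i. w$i \<noteq> w'$i} \<noteq> {}" using c by (intro notI) simp
    then obtain i where i: "w$i \<noteq> w'$i" by auto
    define w'' where "w'' = (\<chi> j. if j = i then w$j else w'$j)"
    have w''c: "w''$j = (if j = i then w$j else w'$j)" for j by (simp add: w''_def)
    have "{j. w$j \<noteq> w''$j} = {j. w$j \<noteq> w'$j} - {i}" using w''c by auto
    then have c'': "card {j. w$j \<noteq> w''$j} = n" using c i by simp
    have w'': "w'' \<in> dual_verts" using w w' w''c unfolding dual_verts_def by simp
    have qw'': "q \<in> dual_box w''" using qw qw' w''c unfolding dual_box_mem by simp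
    have IH: "(open_dual_bond \<omega>)\<^sup>*\<^sup>* w w''" using Suc.IH c'' w'' qw'' by blast
    have d1: "\<bar>w$i - w'$i\<bar> = 1"
    proof -
      obtain a where a: "w$i - w'$i = of_int a" using dv_diff_int[OF w w'] by (auto elim: Ints_cases)
      have "\<bar>q$i - w$i\<bar> \<le> 1/2" "\<bar>q$i - w'$i\<bar> \<le> 1/2" using qw qw' unfolding dual_box_mem by blast+
      then have "\<bar>w$i - w'$i\<bar> \<le> 1" by linarith
      then have "\<bar>a\<bar> \<le> 1" "a \<noteq> 0" using a i by auto
      then have "\<bar>a\<bar> = 1" by linarith
      then show ?thesis using a by (metis of_int_1 of_int_abs)
    qed
    have bond: "dual_bond w'' w'"
    proof -
      have "(\<Sum>j\<in>UNIV. \<bar>w''$j - w'$j\<bar>) = (\<Sum>j\<in>UNIV. if j = i then \<bar>w$i - w'$i\<bar> else 0)"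
        by (rule sum.cong) (auto simp: w''c)
      also have "\<dots> = 1" using d1 by simp
      finally show ?thesis unfolding dual_bond_def using w'' w' by simp
    qed
    have "q \<in> bond_face w'' w'" unfolding bond_face_def using qw'' qw' by simp
    moreover obtain l k where "bond_face w'' w' = fset l k" using bond_face_face[OF bond] faces_eq by blast
    ultimately have "\<not> \<omega> (bond_face w'' w')" using qK K_mem[of q \<omega>] by auto
    then have "open_dual_bond \<omega> w'' w'" using bond unfolding open_dual_bond_def by simp
    then show "(open_dual_bond \<omega>)\<^sup>*\<^sup>* w w'" using IH by simp
  qed
qed

lemma subcube:
  assumes "q \<notin> Kset \<omega>" "w \<in> dual_verts" "q \<in> dual_box w" "w' \<in> dual_verts" "q \<in> dual_box w'"
  shows "(open_dual_bond \<omega>)\<^sup>*\<^sup>* w w'"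
  using subcube_aux[OF assms(1-3)] assms(4,5) by blast


lemma cluster_refl: "z \<in> dual_cluster \<omega> z"
  unfolding dual_cluster_def by simp

lemma cluster_trans: "y \<in> dual_cluster \<omega> z \<Longrightarrow> (open_dual_bond \<omega>)\<^sup>*\<^sup>* y y' \<Longrightarrow> y' \<in> dual_cluster \<omega> z"
  unfolding dual_cluster_def by simp

lemma cluster_dv: assumes "z \<in> dual_verts" "y \<in> dual_cluster \<omega> z" shows "y \<in> dual_verts"
proof -
  have "(open_dual_bond \<omega>)\<^sup>*\<^sup>* z y" using assms(2) unfolding dual_cluster_def by simp
  then show ?thesis
    by (induction rule: rtranclp_induct) (auto simp: assms(1) open_dual_bond_def dual_bond_def)
qed

lemma cluster_cc: assumes "z \<in> dual_verts" "y \<in> dual_cluster \<omega> z"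
  shows "connected_component (- Kset \<omega>) z y"
proof -
  have "(open_dual_bond \<omega>)\<^sup>*\<^sup>* z y" using assms(2) unfolding dual_cluster_def by simp
  then show ?thesis
  proof (induction rule: rtranclp_induct)
    case base
    then show ?case using dv_notK[OF assms(1)] by simp
  next
    case (step y y')
    then show ?case using bond_cc connected_component_trans by metis
  qed
qed

lemma trap:
  assumes z: "z \<in> dual_verts" and q: "q \<in> connected_component_set (- Kset \<omega>) z"
  shows "\<exists>w\<in>dual_cluster \<omega> z. q \<in> dual_box w"
proof -
  let ?C = "dual_cluster \<omega> z"
  let ?D = "connected_component_set (- Kset \<omega>) z"
  define A where "A = {q. q \<notin> Kset \<omega> \<and> (\<exists>w\<in>?C. q \<in> dual_box w)}"
  define B where "B = {q. q \<notin> Kset \<omega> \<and> \<not> (\<exists>w\<in>?C. q \<in> dual_box w)}"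
  have loc: "y \<notin> Kset \<omega> \<and> (\<exists>w\<in>dual_verts. y \<in> dual_box w \<and> q \<in> dual_box w)"
    if g: "goodr q e" and d: "dist q y < e" and qK: "q \<notin> Kset \<omega>" for q y e
  proof
    show "y \<notin> Kset \<omega>"
    proof
      assume "y \<in> Kset \<omega>"
      then obtain l k where "\<omega> (fset l k)" "y \<in> fset l k" using K_mem by blast
      then show False using local_face[OF g d] qK K_mem by blast
    qed
    obtain w where "w \<in> dual_verts" "y \<in> dual_box w" using some_box by blast
    then show "\<exists>w\<in>dual_verts. y \<in> dual_box w \<and> q \<in> dual_box w" using local_box[OF g d] by blast
  qed
  have "open A"
  proof (unfold open_contains_ball, intro ballI)
    fix q assume "q \<in> A"
    then obtain w0 where qK: "q \<notin> Kset \<omega>" and w0: "w0 \<in> ?C" "q \<in> dual_box w0" unfolding A_def by auto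
    obtain e where g: "goodr q e" using goodr_ex by blast
    have "ball q e \<subseteq> A"
    proof
      fix y assume "y \<in> ball q e"
      then have d: "dist q y < e" by simp
      obtain w where "y \<notin> Kset \<omega>" "w \<in> dual_verts" "y \<in> dual_box w" "q \<in> dual_box w"
        using loc[OF g d qK] by blast
      moreover have "w \<in> ?C"
        using cluster_trans[OF w0(1) subcube[OF qK cluster_dv[OF z w0(1)] w0(2)]] calculation by blast
      ultimately show "y \<in> A" unfolding A_def by blast
    qed
    then show "\<exists>e>0. ball q e \<subseteq> A" using g unfolding goodr_def by blast
  qed
  moreover have "open B"
  proof (unfold open_contains_ball, intro ballI)
    fix q assume "q \<in> B"
    then have qK: "q \<notin> Kset \<omega>" and nq: "\<not> (\<exists>w\<in>?C. q \<in> dual_box w)" unfolding B_def by auto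
    obtain e where g: "goodr q e" using goodr_ex by blast
    have "ball q e \<subseteq> B"
    proof
      fix y assume "y \<in> ball q e"
      then have d: "dist q y < e" by simp
      have yK: "y \<notin> Kset \<omega>" using loc[OF g d qK] by blast
      have "\<not> (\<exists>w\<in>?C. y \<in> dual_box w)"
        using local_box[OF g d] nq cluster_dv[OF z] by blast
      then show "y \<in> B" unfolding B_def using yK by blast
    qed
    then show "\<exists>e>0. ball q e \<subseteq> B" using g unfolding goodr_def by blast
  qed
  moreover have "A \<inter> B \<inter> ?D = {}" unfolding A_def B_def by blast
  moreover have "?D \<subseteq> A \<union> B" unfolding A_def B_def using connected_component_subset by blast
  ultimately have "A \<inter> ?D = {} \<or> B \<inter> ?D = {}"
    using connectedD[OF connected_connected_component] by blast
  moreover have "z \<in> A \<inter> ?D"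
  proof -
    have "z \<notin> Kset \<omega>" using dv_notK[OF z] .
    moreover have "z \<in> dual_box z" unfolding dual_box_mem by simp
    ultimately show ?thesis unfolding A_def using cluster_refl by fastforce
  qed
  ultimately have "B \<inter> ?D = {}" by blast
  then have "q \<in> A" using q \<open>?D \<subseteq> A \<union> B\<close> by blast
  then show ?thesis unfolding A_def by blast
qed

lemma DC_eq:
  assumes z: "z \<in> dual_verts"
  shows "connected_component_set (- Kset \<omega>) z \<inter> dual_verts = dual_cluster \<omega> z"
proof
  show "connected_component_set (- Kset \<omega>) z \<inter> dual_verts \<subseteq> dual_cluster \<omega> z"
  proof
    fix v assume v: "v \<in> connected_component_set (- Kset \<omega>) z \<inter> dual_verts"
    then obtain w where "w \<in> dual_cluster \<omega> z" "v \<in> dual_box w" using trap[OF z] by blast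
    then show "v \<in> dual_cluster \<omega> z" using dv_box_eq v cluster_dv[OF z] by blast
  qed
  show "dual_cluster \<omega> z \<subseteq> connected_component_set (- Kset \<omega>) z \<inter> dual_verts"
    using cluster_cc[OF z] cluster_dv[OF z] by blast
qed

lemma bounded_D:
  assumes z: "z \<in> dual_verts" and f: "finite (dual_cluster \<omega> z)"
  shows "bounded (connected_component_set (- Kset \<omega>) z)"
proof -
  have "connected_component_set (- Kset \<omega>) z \<subseteq> \<Union> (dual_box ` dual_cluster \<omega> z)"
    using trap[OF z] by blast
  moreover have "bounded (\<Union> (dual_box ` dual_cluster \<omega> z))"
    using f by (auto simp: dual_box_def intro: bounded_cbox)
  ultimately show ?thesis using bounded_subset by blast
qed

lemma dv_bounded_finite:
  assumes "bounded S" shows "finite (S \<inter> dual_verts)"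
proof -
  obtain M where M: "\<And>x. x \<in> S \<Longrightarrow> norm x \<le> M" using assms bounded_iff by blast
  define f where "f = (\<lambda>v::real^'a. \<lambda>j. \<lfloor>v$j\<rfloor>)"
  define N where "N = \<lceil>M\<rceil> + 1"
  have "inj_on f (S \<inter> dual_verts)"
  proof (rule inj_onI)
    fix v v' assume v: "v \<in> S \<inter> dual_verts" and v': "v' \<in> S \<inter> dual_verts" and e: "f v = f v'"
    have "v$j = v'$j" for j
    proof -
      have "\<lfloor>v$j\<rfloor> = \<lfloor>v'$j\<rfloor>" using e unfolding f_def by metis
      then show ?thesis using floor_half[OF dv_half, of v j] floor_half[OF dv_half, of v' j] v v'
        by (metis IntD2 add_diff_cancel_right' diff_add_cancel)
    qed
    then show "v = v'" by (simp add: vec_eq_iff)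
  qed
  moreover have "f ` (S \<inter> dual_verts) \<subseteq> PiE UNIV (\<lambda>_. {-N..N})"
  proof
    fix g assume "g \<in> f ` (S \<inter> dual_verts)"
    then obtain v where v: "v \<in> S" and g: "g = f v" by blast
    have "\<lfloor>v$j\<rfloor> \<in> {-N..N}" for j
    proof -
      have "\<bar>v$j\<bar> \<le> M" using M[OF v] component_le_norm_cart[of v j] by linarith
      then have "-M \<le> v$j" "v$j \<le> M" by linarith+
      moreover have "M \<le> of_int \<lceil>M\<rceil>" by (rule le_of_int_ceiling)
      ultimately have h1: "real_of_int (-N) \<le> v$j" and h2: "v$j < real_of_int N + 1"
        unfolding N_def by (simp; linarith)+
      have "-N \<le> \<lfloor>v$j\<rfloor>" using h1 le_floor_iff by blast
      moreover have "\<lfloor>v$j\<rfloor> \<le> N" using h2 floor_le_iff by blast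
      ultimately show ?thesis by simp
    qed
    then show "g \<in> PiE UNIV (\<lambda>_. {-N..N})" unfolding g f_def by auto
  qed
  moreover have "finite (PiE (UNIV::'a set) (\<lambda>_. {-N..N}))" by (intro finite_PiE) auto
  ultimately show ?thesis using inj_on_finite by blast
qed

lemma hole_rep:
  assumes "hole \<omega> D" shows "\<exists>z\<in>dual_verts. D = connected_component_set (- Kset \<omega>) z"
proof -
  obtain x where x: "x \<in> - Kset \<omega>" and D: "D = connected_component_set (- Kset \<omega>) x"
    using assms unfolding hole_def components_iff by blast
  obtain w where w: "w \<in> dual_verts" "x \<in> dual_box w" using some_box by blast
  have "connected_component (- Kset \<omega>) w x" using seg_cc[OF w] x by simp
  then have "connected_component_set (- Kset \<omega>) x = connected_component_set (- Kset \<omega>) w"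
    using connected_component_eq by blast
  then show ?thesis using D w by blast
qed

lemma comp_dv: "z \<in> dual_verts \<Longrightarrow> connected_component_set (- Kset \<omega>) z \<in> components (- Kset \<omega>)"
  unfolding components_iff using dv_notK by blast


abbreviation ccs where "ccs \<omega> z \<equiv> connected_component_set (- Kset \<omega>) z"

lemma hole_z: "z \<in> dual_verts \<Longrightarrow> finite (dual_cluster \<omega> z) \<Longrightarrow>
    hole \<omega> (ccs \<omega> z) \<and> ccs \<omega> z \<inter> dual_verts = dual_cluster \<omega> z"
  using comp_dv bounded_D DC_eq unfolding hole_def by blast

lemma hole_uniq:
  assumes z: "z \<in> dual_verts" and h: "hole \<omega> D'" and e: "D' \<inter> dual_verts = dual_cluster \<omega> z"
  shows "D' = ccs \<omega> z"
proof -
  have "z \<in> D'" using e cluster_refl by blast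
  moreover obtain z' where "D' = ccs \<omega> z'" using hole_rep[OF h] by blast
  ultimately show ?thesis using connected_component_eq by blast
qed

lemma hole_of_eq:
  assumes "z \<in> dual_verts" "finite (dual_cluster \<omega> z)"
  shows "hole_of \<omega> (dual_cluster \<omega> z) = ccs \<omega> z"
  unfolding hole_of_def
  by (rule the_equality) (use hole_z[OF assms] hole_uniq[OF assms(1)] in blast)+

lemma ccs_disj:
  assumes "ccs \<omega> z \<noteq> ccs \<omega> z'" shows "ccs \<omega> z \<inter> ccs \<omega> z' = {}"
  using assms connected_component_eq by blast

lemma box_frontier:
  assumes x: "x \<in> dual_verts" "x \<in> ccs \<omega> z" and q: "q \<in> dual_box x" "q \<in> Kset \<omega>"
  shows "q \<in> frontier (ccs \<omega> z)"
proof -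
  have "q \<noteq> x" using dv_notK[OF x(1)] q(2) by blast
  have sub: "open_segment x q \<subseteq> ccs \<omega> z"
  proof
    fix p assume "p \<in> open_segment x q"
    then obtain u where u: "0 < u" "u < 1" "p = (1 - u) *\<^sub>R x + u *\<^sub>R q" by (auto simp: in_segment)
    have c: "\<bar>p$j - x$j\<bar> < 1/2" for j
    proof -
      have "p$j = (1-u) * x$j + u * q$j" using u(3) by simp
      then have "p$j - x$j = u * (q$j - x$j)" by (simp add: algebra_simps)
      then have "\<bar>p$j - x$j\<bar> = u * \<bar>q$j - x$j\<bar>" using u(1) by (simp add: abs_mult)
      also have "\<dots> \<le> u * (1/2)" using q(1) dual_box_mem u(1) by (meson less_imp_le mult_left_mono)
      also have "\<dots> < 1/2" using u by simp
      finally show ?thesis .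
    qed
    then have "p \<notin> Kset \<omega>" "p \<in> dual_box x" using inner_notK[OF x(1)] dual_box_mem by (blast, smt (verit))
    then have "connected_component (- Kset \<omega>) x p" using seg_cc[OF x(1)] by blast
    then show "p \<in> ccs \<omega> z" using x(2) connected_component_eq by blast
  qed
  have "q \<in> closure (open_segment x q)" using \<open>q \<noteq> x\<close> by simp
  then have "q \<in> closure (ccs \<omega> z)" using closure_mono[OF sub] by blast
  moreover have "q \<notin> interior (ccs \<omega> z)" using q(2) interior_subset connected_component_subset by blast
  ultimately show ?thesis unfolding frontier_def by blast
qed

lemma dual_bond_sym: "dual_bond x y \<Longrightarrow> dual_bond y x"
  unfolding dual_bond_def by (simp add: abs_minus_commute)

lemma face_sub_K: "Q \<in> faces \<Longrightarrow> \<omega> Q \<Longrightarrow> Q \<subseteq> Kset \<omega>"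
  unfolding Kset_def by blast


lemma coords_bond:
  assumes "w \<in> dual_verts" "w' \<in> dual_verts" "\<bar>w$k - w'$k\<bar> = 1" "\<forall>j. j \<noteq> k \<longrightarrow> w$j = w'$j"
  shows "dual_bond w w'"
proof -
  have "(\<Sum>j\<in>UNIV. \<bar>w$j - w'$j\<bar>) = (\<Sum>j\<in>UNIV. if j = k then \<bar>w$k - w'$k\<bar> else 0)"
    by (rule sum.cong) (use assms(4) in auto)
  also have "\<dots> = 1" using assms(3) by simp
  finally show ?thesis unfolding dual_bond_def using assms by simp
qed

lemma frontier_box:
  assumes "m \<in> frontier (ccs \<omega> z)"
  shows "\<exists>w\<in>dual_verts. w \<in> ccs \<omega> z \<and> m \<in> dual_box w"
proof -
  obtain e where g: "goodr m e" using goodr_ex by blast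
  have "m \<in> closure (ccs \<omega> z)" using assms unfolding frontier_def by blast
  then obtain y where y: "y \<in> ccs \<omega> z" "dist y m < e" using g unfolding closure_approachable goodr_def by blast
  obtain w where w: "w \<in> dual_verts" "y \<in> dual_box w" using some_box by blast
  have "dist m y < e" using y(2) by (simp add: dist_commute)
  then have mw: "m \<in> dual_box w" using local_box[OF g _ w(2) w(1)] by blast
  have "y \<notin> Kset \<omega>" using y(1) connected_component_subset by blast
  then have "connected_component (- Kset \<omega>) w y" using seg_cc[OF w] by blast
  then have "w \<in> ccs \<omega> z" using y(1) connected_component_eq connected_component_sym
    by (metis mem_Collect_eq)
  then show ?thesis using w mw by blast
qed

lemma center_bond:
  assumes m: "m = (\<chi> j. if j = k then of_int (l$k) else of_int (l$j) + 1/2)"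
    and w: "w \<in> dual_verts" "m \<in> dual_box w" and w': "w' \<in> dual_verts" "m \<in> dual_box w'"
    and ne: "w \<noteq> w'"
  shows "dual_bond w w'"
proof -
  have eq: "v$j = m$j" if "j \<noteq> k" "v \<in> dual_verts" "m \<in> dual_box v" for v j
  proof -
    have "v$j - m$j = (v$j - 1/2) - of_int (l$j)" using m that(1) by simp
    then have "v$j - m$j \<in> \<int>" using dv_half[OF that(2)] by (metis Ints_diff Ints_of_int)
    moreover have "\<bar>v$j - m$j\<bar> \<le> 1/2" using that(3) dual_box_mem by (metis abs_minus_commute)
    ultimately show ?thesis using int_small by fastforce
  qed
  have o: "\<forall>j. j \<noteq> k \<longrightarrow> w$j = w'$j" using eq w w' by metis
  have "w$k \<noteq> w'$k"
  proof
    assume "w$k = w'$k"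
    then have "w = w'" using o by (metis vec_eq_iff)
    then show False using ne by simp
  qed
  moreover have "\<bar>m$k - w$k\<bar> \<le> 1/2" "\<bar>m$k - w'$k\<bar> \<le> 1/2" using w(2) w'(2) dual_box_mem by blast+
  then have "\<bar>w$k - w'$k\<bar> \<le> 1" by linarith
  moreover obtain a where a: "w$k - w'$k = of_int a" using dv_diff_int[OF w(1) w'(1)] by (auto elim: Ints_cases)
  ultimately have "\<bar>a\<bar> \<le> 1" "a \<noteq> 0" by auto
  then have "\<bar>a\<bar> = 1" by linarith
  then have "\<bar>w$k - w'$k\<bar> = 1" using a by (metis of_int_1 of_int_abs)
  then show ?thesis using coords_bond[OF w(1) w'(1) _ o] by blast
qed

theorem proposition3p1:
  fixes \<omega> :: "(real^'n) set \<Rightarrow> bool"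
  assumes "CARD('n) \<ge> 2"
  shows "(\<forall>C\<in>finite_dual_clusters \<omega>. \<exists>!D. hole \<omega> D \<and> D \<inter> dual_verts = C)
    \<and> bij_betw (hole_of \<omega>) (finite_dual_clusters \<omega>) {D. hole \<omega> D}
    \<and> (\<forall>C\<in>finite_dual_clusters \<omega>. \<forall>C'\<in>finite_dual_clusters \<omega>. C \<noteq> C' \<longrightarrow>
         (adjacent_holes \<omega> (hole_of \<omega> C) (hole_of \<omega> C') \<longleftrightarrow>
          edge_boundary C \<inter> edge_boundary C' \<noteq> {}))"
proof -
  let ?F = "finite_dual_clusters \<omega>"
  have rep: "\<exists>z\<in>dual_verts. C = dual_cluster \<omega> z \<and> finite (dual_cluster \<omega> z)" if "C \<in> ?F" for C
    using that unfolding finite_dual_clusters_def by blast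
  have P1: "\<forall>C\<in>?F. \<exists>!D. hole \<omega> D \<and> D \<inter> dual_verts = C"
  proof
    fix C assume "C \<in> ?F"
    then obtain z where z: "z \<in> dual_verts" "C = dual_cluster \<omega> z" "finite (dual_cluster \<omega> z)"
      using rep by blast
    show "\<exists>!D. hole \<omega> D \<and> D \<inter> dual_verts = C"
      by (rule ex1I[of _ "ccs \<omega> z"]) (use hole_z[OF z(1,3)] hole_uniq[OF z(1)] z(2) in blast)+
  qed
  have HO: "hole \<omega> (hole_of \<omega> C) \<and> hole_of \<omega> C \<inter> dual_verts = C" if hC: "C \<in> ?F" for C
  proof -
    obtain z where z: "z \<in> dual_verts" "C = dual_cluster \<omega> z" "finite (dual_cluster \<omega> z)"
      using rep[OF hC] by blast
    show ?thesis using hole_of_eq[OF z(1,3)] hole_z[OF z(1,3)] z(2) by simp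
  qed
  have P2: "bij_betw (hole_of \<omega>) ?F {D. hole \<omega> D}"
    unfolding bij_betw_def
  proof
    show "inj_on (hole_of \<omega>) ?F"
    proof (rule inj_onI)
      fix C1 C2 assume "C1 \<in> ?F" "C2 \<in> ?F" "hole_of \<omega> C1 = hole_of \<omega> C2"
      then show "C1 = C2" using HO by metis
    qed
    show "hole_of \<omega> ` ?F = {D. hole \<omega> D}"
    proof
      show "hole_of \<omega> ` ?F \<subseteq> {D. hole \<omega> D}" using HO by blast
      show "{D. hole \<omega> D} \<subseteq> hole_of \<omega> ` ?F"
      proof
        fix D assume "D \<in> {D. hole \<omega> D}"
        then have h: "hole \<omega> D" by simp
        then obtain z where z: "z \<in> dual_verts" "D = ccs \<omega> z" using hole_rep by blast
        have "bounded D" using h unfolding hole_def by simp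
        then have f: "finite (dual_cluster \<omega> z)" using dv_bounded_finite[of D] DC_eq[OF z(1)] z(2) by simp
        then have "dual_cluster \<omega> z \<in> ?F" using z(1) unfolding finite_dual_clusters_def by blast
        moreover have "hole_of \<omega> (dual_cluster \<omega> z) = D" using hole_of_eq[OF z(1) f] z(2) by simp
        ultimately show "D \<in> hole_of \<omega> ` ?F" by blast
      qed
    qed
  qed
  have P3: "adjacent_holes \<omega> (hole_of \<omega> C) (hole_of \<omega> C') \<longleftrightarrow>
          edge_boundary C \<inter> edge_boundary C' \<noteq> {}" if C: "C \<in> ?F" and C': "C' \<in> ?F" and ne: "C \<noteq> C'" for C C'
  proof -
    obtain z where z: "z \<in> dual_verts" "C = dual_cluster \<omega> z" "finite (dual_cluster \<omega> z)"
      using rep[OF C] by blast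
    obtain z' where z': "z' \<in> dual_verts" "C' = dual_cluster \<omega> z'" "finite (dual_cluster \<omega> z')"
      using rep[OF C'] by blast
    have hD: "hole_of \<omega> C = ccs \<omega> z" using hole_of_eq[OF z(1,3)] z(2) by simp
    have hD': "hole_of \<omega> C' = ccs \<omega> z'" using hole_of_eq[OF z'(1,3)] z'(2) by simp
    have CD: "C = ccs \<omega> z \<inter> dual_verts" using DC_eq[OF z(1)] z(2) by simp
    have CD': "C' = ccs \<omega> z' \<inter> dual_verts" using DC_eq[OF z'(1)] z'(2) by simp
    have dis: "ccs \<omega> z \<inter> ccs \<omega> z' = {}" using ccs_disj ne CD CD' by metis
    show ?thesis
    proof
      assume "adjacent_holes \<omega> (hole_of \<omega> C) (hole_of \<omega> C')"
      then obtain Q where Q: "Q \<in> faces" "Q \<subseteq> frontier (ccs \<omega> z)" "Q \<subseteq> frontier (ccs \<omega> z')"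
        unfolding adjacent_holes_def hD hD' by blast
      then obtain l k where Qe: "Q = fset l k" using faces_eq by blast
      define m where "m = ((\<chi> j. if j = k then of_int (l$k) else of_int (l$j) + 1/2) :: real^'n)"
      have "m \<in> Q" unfolding Qe fset_def m_def by auto
      then obtain w w' where w: "w \<in> dual_verts" "w \<in> ccs \<omega> z" "m \<in> dual_box w"
        and w': "w' \<in> dual_verts" "w' \<in> ccs \<omega> z'" "m \<in> dual_box w'"
        using frontier_box Q by blast
      have "w \<noteq> w'" using w w' dis by blast
      then have b: "dual_bond w w'" using center_bond[OF m_def w(1,3) w'(1,3)] by blast
      have "w \<in> C" "w \<notin> C'" "w' \<in> C'" "w' \<notin> C" using w w' CD CD' dis by blast+
      then have "{w, w'} \<in> edge_boundary C" "{w', w} \<in> edge_boundary C'"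
        unfolding edge_boundary_def using b dual_bond_sym by blast+
      then show "edge_boundary C \<inter> edge_boundary C' \<noteq> {}" by (metis IntI empty_iff insert_commute)
    next
      assume "edge_boundary C \<inter> edge_boundary C' \<noteq> {}"
      then obtain x y x' y' where e: "{x, y} = {x', y'}" "dual_bond x y" "x \<in> C" "y \<notin> C"
        "dual_bond x' y'" "x' \<in> C'" "y' \<notin> C'"
        unfolding edge_boundary_def by blast
      have "x \<noteq> x'" using e(3,6) CD CD' dis by blast
      then have xy: "x = y'" "y = x'" using e(1) by (metis doubleton_eq_iff)+
      let ?Q = "bond_face x y"
      have Qf: "?Q \<in> faces" using bond_face_face[OF e(2)] .
      have "\<omega> ?Q"
      proof (rule ccontr)
        assume "\<not> \<omega> ?Q"
        then have "open_dual_bond \<omega> x y" using e(2) unfolding open_dual_bond_def by simp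
        then have "y \<in> C" using cluster_trans[of x \<omega> z y] e(3) z(2) by auto
        then show False using e(4) by simp
      qed
      then have QK: "?Q \<subseteq> Kset \<omega>" using face_sub_K[OF Qf] by blast
      have xd: "x \<in> dual_verts" "y \<in> dual_verts" using e(2) unfolding dual_bond_def by auto
      have "x \<in> ccs \<omega> z" "y \<in> ccs \<omega> z'" using e(3,6) xy CD CD' by blast+
      then have "?Q \<subseteq> frontier (ccs \<omega> z)" "?Q \<subseteq> frontier (ccs \<omega> z')"
        using box_frontier[OF xd(1)] box_frontier[OF xd(2)] QK unfolding bond_face_def by blast+
      then show "adjacent_holes \<omega> (hole_of \<omega> C) (hole_of \<omega> C')"
        unfolding adjacent_holes_def hD hD' using Qf by blast
    qed
  qed
  show ?thesis using P1 P2 P3 by blast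
qed

end
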